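(* Let $\mathbb{F}$ be a field, $d\geq3$ and $V$ a vector space over $\mathbb{F}$ of dimension $d+1$. Let $E^*_0,\dots,E^*_d$ be a system of mutually orthogonal idempotents in $\mathrm{End}(V)$ and $A\in\mathrm{End}(V)$ with $E^*_iAE^*_j=0$ if $|i-j|>1$ and $E^*_iAE^*_j\neq0$ if $|i-j|=1$. Assume $A$ is multiplicity-free and bipartite with primitive idempotents $E_0,\dots,E_d$. Let $\theta^*_0,\dots,\theta^*_d\in\mathbb{F}$ be mutually distinct and $A^*=\sum_i\theta^*_iE^*_i$. Assume $E_0$ is normalizing and $(E_0,E_1)$ is a tail. Then there exists $\beta\in\mathbb{F}$ such that $\theta^*_{i-1}-\beta\theta^*_i+\theta^*_{i+1}$ is independent of $i$ for $1\le i\le d-1$.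
   Context: A system of mutually orthogonal idempotents: $E^*_iE^*_j=\delta_{ij}E^*_i$, $\operatorname{rank}E^*_i=1$. $A$ multiplicity-free: $d+1$ distinct eigenvalues in $\mathbb{F}$; the primitive idempotent for an eigenvalue is the projection onto its eigenspace along the other eigenspaces. Bipartite: $\operatorname{tr}(E^*_iA)=0$ for all $i$. $\Delta$: graph on $E_0,\dots,E_d$ with $E_i\neq E_j$ adjacent iff $E_iA^*E_j\neq0$. $(E_0,E_1)$ is a tail if $E_0$ is adjacent to no vertex other than $E_1$ and $E_1$ is adjacent to at most one vertex other than $E_0$. The matrix $Y$ representing $A$ w.r.t. a basis $v_0,\dots,v_d$ satisfies $Av_j=\sum_iY_{ij}v_i$. An eigenvalue $\theta$ of $A$ is normalizing if some basis with $v_i\in E^*_iV$ makes every row sum of the matrix representing $A$ equal to $\theta$; a primitive idempotent is normalizing if its eigenvalue is. *)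

theory Defs
  imports "Jordan_Normal_Form.DL_Rank" "Jordan_Normal_Form.Char_Poly"
begin

text \<open>End(V) for a (d+1)-dimensional F-vector space V is represented, after fixing a
basis, by the square matrices of size n = d+1 over the field 'a.\<close>

definition mtrace :: "'a::comm_ring_1 mat \<Rightarrow> 'a" where
  "mtrace M = (\<Sum>i<dim_row M. M $$ (i, i))"

definition mat_lincomb :: "nat \<Rightarrow> nat \<Rightarrow> (nat \<Rightarrow> 'a::comm_ring_1) \<Rightarrow> (nat \<Rightarrow> 'a mat) \<Rightarrow> 'a mat" where
  "mat_lincomb n d c M = mat n n (\<lambda>(k, l). \<Sum>i\<le>d. c i * M i $$ (k, l))"

definition vec_lincomb :: "nat \<Rightarrow> nat \<Rightarrow> (nat \<Rightarrow> 'a::comm_ring_1) \<Rightarrow> (nat \<Rightarrow> 'a vec) \<Rightarrow> 'a vec" where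
  "vec_lincomb n d c v = vec n (\<lambda>k. \<Sum>i\<le>d. c i * v i $ k)"

definition orth_idem_system :: "nat \<Rightarrow> nat \<Rightarrow> (nat \<Rightarrow> 'a::field mat) \<Rightarrow> bool" where
  "orth_idem_system n d Es \<longleftrightarrow>
     (\<forall>i\<le>d. Es i \<in> carrier_mat n n) \<and>
     (\<forall>i\<le>d. \<forall>j\<le>d. Es i * Es j = (if i = j then Es i else 0\<^sub>m n n)) \<and>
     (\<forall>i\<le>d. vec_space.rank n (Es i) = 1)"

definition mult_free_eigs :: "nat \<Rightarrow> 'a::field mat \<Rightarrow> (nat \<Rightarrow> 'a) \<Rightarrow> bool" where
  "mult_free_eigs d A th \<longleftrightarrow> inj_on th {..d} \<and> (\<forall>i\<le>d. eigenvalue A (th i))"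

definition primitive_idem :: "nat \<Rightarrow> nat \<Rightarrow> 'a::field mat \<Rightarrow> (nat \<Rightarrow> 'a) \<Rightarrow> nat \<Rightarrow> 'a mat \<Rightarrow> bool" where
  "primitive_idem n d A th i E \<longleftrightarrow> E \<in> carrier_mat n n \<and>
     (\<forall>v \<in> carrier_vec n. A *\<^sub>v v = th i \<cdot>\<^sub>v v \<longrightarrow> E *\<^sub>v v = v) \<and>
     (\<forall>j\<le>d. j \<noteq> i \<longrightarrow> (\<forall>v \<in> carrier_vec n. A *\<^sub>v v = th j \<cdot>\<^sub>v v \<longrightarrow> E *\<^sub>v v = 0\<^sub>v n))"

definition bipartite :: "nat \<Rightarrow> (nat \<Rightarrow> 'a::field mat) \<Rightarrow> 'a mat \<Rightarrow> bool" where
  "bipartite d Es A \<longleftrightarrow> (\<forall>i\<le>d. mtrace (Es i * A) = 0)"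

definition normalizing :: "nat \<Rightarrow> nat \<Rightarrow> (nat \<Rightarrow> 'a::field mat) \<Rightarrow> 'a mat \<Rightarrow> 'a \<Rightarrow> bool" where
  "normalizing n d Es A theta \<longleftrightarrow>
     (\<exists>v :: nat \<Rightarrow> 'a vec. \<exists>Y :: nat \<Rightarrow> nat \<Rightarrow> 'a.
        (\<forall>i\<le>d. v i \<in> carrier_vec n \<and> (\<exists>w \<in> carrier_vec n. v i = Es i *\<^sub>v w)) \<and>
        (\<forall>c. vec_lincomb n d c v = 0\<^sub>v n \<longrightarrow> (\<forall>i\<le>d. c i = 0)) \<and>
        (\<forall>j\<le>d. A *\<^sub>v v j = vec_lincomb n d (\<lambda>i. Y i j) v) \<and>
        (\<forall>i\<le>d. (\<Sum>j\<le>d. Y i j) = theta))"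

definition delta_adj :: "nat \<Rightarrow> (nat \<Rightarrow> 'a::field mat) \<Rightarrow> 'a mat \<Rightarrow> nat \<Rightarrow> nat \<Rightarrow> bool" where
  "delta_adj n E As i j \<longleftrightarrow> i \<noteq> j \<and> E i * As * E j \<noteq> 0\<^sub>m n n"

definition is_tail :: "nat \<Rightarrow> nat \<Rightarrow> (nat \<Rightarrow> 'a::field mat) \<Rightarrow> 'a mat \<Rightarrow> bool" where
  "is_tail n d E As \<longleftrightarrow>
     (\<forall>j\<le>d. delta_adj n E As 0 j \<longrightarrow> j = 1) \<and>
     card {j. j \<le> d \<and> j \<noteq> 0 \<and> delta_adj n E As 1 j} \<le> 1"

end

theory Submission
  imports Defs
begin


lemma inv_of_inj:
  fixes A :: "'a::field mat"
  assumes A: "A \<in> carrier_mat n n"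
    and inj: "\<And>c. c \<in> carrier_vec n \<Longrightarrow> A *\<^sub>v c = 0\<^sub>v n \<Longrightarrow> c = 0\<^sub>v n"
  shows "\<exists>B \<in> carrier_mat n n. B * A = 1\<^sub>m n \<and> A * B = 1\<^sub>m n"
proof -
  have "det A \<noteq> 0" using det_0_iff_vec_prod_zero_field[OF A] inj by auto
  from det_non_zero_imp_unit[OF A this, of "()"]
  have "A \<in> Units (ring_mat TYPE('a) n ())" .
  then show ?thesis unfolding Units_def ring_mat_def by auto
qed

lemma mat_vec_cols:
  fixes M :: "'a::comm_ring_1 mat"
  assumes M: "M \<in> carrier_mat n n" and u: "\<And>s. s < n \<Longrightarrow> u s \<in> carrier_vec n"
    and c: "c \<in> carrier_vec n"
  shows "M *\<^sub>v (mat n n (\<lambda>(i,s). u s $ i) *\<^sub>v c) = vec n (\<lambda>i. \<Sum>s<n. c $ s * (M *\<^sub>v u s) $ i)"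
proof -
  let ?U = "mat n n (\<lambda>(i,s). u s $ i)"
  have U: "?U \<in> carrier_mat n n" by simp
  have "M *\<^sub>v (?U *\<^sub>v c) = (M * ?U) *\<^sub>v c" using assoc_mult_mat_vec[OF M U c] by simp
  also have "\<dots> = vec n (\<lambda>i. \<Sum>s<n. c $ s * (M *\<^sub>v u s) $ i)"
  proof (rule eq_vecI)
    fix i assume i: "i < dim_vec (vec n (\<lambda>i. \<Sum>s<n. c $ s * (M *\<^sub>v u s) $ i))"
    then have i: "i < n" by simp
    have "((M * ?U) *\<^sub>v c) $ i = (\<Sum>s<n. (M * ?U) $$ (i, s) * c $ s)"
      using M c i by (simp add: mult_mat_vec_def scalar_prod_def lessThan_atLeast0)
    also have "\<dots> = (\<Sum>s<n. c $ s * (M *\<^sub>v u s) $ i)"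
    proof (rule sum.cong[OF refl])
      fix s assume s: "s \<in> {..<n}"
      have "col ?U s = u s" using u[of s] s by (intro eq_vecI) auto
      then have "(M * ?U) $$ (i, s) = (M *\<^sub>v u s) $ i" using M i s by (simp add: mult_mat_vec_def)
      then show "(M * ?U) $$ (i, s) * c $ s = c $ s * (M *\<^sub>v u s) $ i" by simp
    qed
    finally show "((M * ?U) *\<^sub>v c) $ i = vec n (\<lambda>i. \<Sum>s<n. c $ s * (M *\<^sub>v u s) $ i) $ i" using i by simp
  qed (use M in simp)
  finally show ?thesis .
qed

lemma mat_vec_nth_sum:
  fixes M :: "'a::comm_ring_1 mat"
  assumes "M \<in> carrier_mat n n" "p \<in> carrier_vec n" "i < n"
  shows "(M *\<^sub>v p) $ i = (\<Sum>j<n. M $$ (i,j) * p $ j)"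
  using assms by (simp add: mult_mat_vec_def scalar_prod_def lessThan_atLeast0)

lemma sum_two:
  fixes f :: "nat \<Rightarrow> 'a::comm_monoid_add"
  assumes "2 \<le> n" "\<And>s. s < n \<Longrightarrow> s \<noteq> 0 \<Longrightarrow> s \<noteq> 1 \<Longrightarrow> f s = 0"
  shows "(\<Sum>s<n. f s) = f 0 + f 1"
proof -
  have "(\<Sum>s<n. f s) = (\<Sum>s\<in>{0,1}. f s)"
    by (rule sum.mono_neutral_right) (use assms in auto)
  then show ?thesis by simp
qed

definition Bf :: "nat \<Rightarrow> (nat \<Rightarrow> 'a::comm_ring_1) \<Rightarrow> 'a vec \<Rightarrow> 'a vec \<Rightarrow> 'a" where
  "Bf n m p q = (\<Sum>i<n. m i * p $ i * q $ i)"

lemma Bf_comm: "Bf n m p q = Bf n m q p"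
  unfolding Bf_def by (simp add: ac_simps)

lemma Bf_smult: "p \<in> carrier_vec n \<Longrightarrow> Bf n m (a \<cdot>\<^sub>v p) q = a * Bf n m p q"
  unfolding Bf_def by (simp add: sum_distrib_left ac_simps)

lemma Bf_U:
  assumes u: "\<And>s. s < n \<Longrightarrow> u s \<in> carrier_vec n" and c: "c \<in> carrier_vec n"
  shows "Bf n m (mat n n (\<lambda>(i,s). u s $ i) *\<^sub>v c) q = (\<Sum>s<n. c $ s * Bf n m (u s) q)"
proof -
  have e: "mat n n (\<lambda>(i,s). u s $ i) *\<^sub>v c = vec n (\<lambda>i. \<Sum>s<n. c $ s * u s $ i)"
  proof -
    have "1\<^sub>m n *\<^sub>v (mat n n (\<lambda>(i,s). u s $ i) *\<^sub>v c) = vec n (\<lambda>i. \<Sum>s<n. c $ s * (1\<^sub>m n *\<^sub>v u s) $ i)"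
      by (rule mat_vec_cols[OF one_carrier_mat u c])
    also have "\<dots> = vec n (\<lambda>i. \<Sum>s<n. c $ s * u s $ i)"
      using u by (intro eq_vecI sum.cong refl) auto
    finally have h: "1\<^sub>m n *\<^sub>v (mat n n (\<lambda>(i,s). u s $ i) *\<^sub>v c) = vec n (\<lambda>i. \<Sum>s<n. c $ s * u s $ i)" .
    have cU: "mat n n (\<lambda>(i,s). u s $ i) *\<^sub>v c \<in> carrier_vec n"
      by (rule mult_mat_vec_carrier[OF _ c]) simp
    show ?thesis using h one_mult_mat_vec[OF cU] by simp
  qed
  have "Bf n m (mat n n (\<lambda>(i,s). u s $ i) *\<^sub>v c) q = (\<Sum>i<n. \<Sum>s<n. m i * (c $ s * u s $ i) * q $ i)"
    unfolding Bf_def e by (simp add: sum_distrib_left sum_distrib_right)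
  also have "\<dots> = (\<Sum>s<n. \<Sum>i<n. m i * (c $ s * u s $ i) * q $ i)" by (rule sum.swap)
  also have "\<dots> = (\<Sum>s<n. c $ s * Bf n m (u s) q)"
    unfolding Bf_def by (simp add: sum_distrib_left ac_simps)
  finally show ?thesis .
qed

lemma Bf_sym_mat:
  fixes Y :: "'a::comm_ring_1 mat"
  assumes Y: "Y \<in> carrier_mat n n" and msym: "\<And>i j. i < n \<Longrightarrow> j < n \<Longrightarrow> m i * Y $$ (i,j) = m j * Y $$ (j,i)"
    and p: "p \<in> carrier_vec n" and q: "q \<in> carrier_vec n"
  shows "Bf n m (Y *\<^sub>v p) q = Bf n m p (Y *\<^sub>v q)"
proof -
  have "Bf n m (Y *\<^sub>v p) q = (\<Sum>i<n. m i * (\<Sum>j<n. Y $$ (i,j) * p $ j) * q $ i)"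
    unfolding Bf_def by (intro sum.cong refl) (use mat_vec_nth_sum[OF Y p] in simp)
  also have "\<dots> = (\<Sum>i<n. \<Sum>j<n. m i * Y $$ (i,j) * p $ j * q $ i)"
    by (simp add: sum_distrib_left sum_distrib_right ac_simps)
  also have "\<dots> = (\<Sum>i<n. \<Sum>j<n. m j * Y $$ (j,i) * p $ j * q $ i)"
    by (intro sum.cong refl) (simp add: msym)
  also have "\<dots> = (\<Sum>j<n. \<Sum>i<n. m j * Y $$ (j,i) * p $ j * q $ i)" by (rule sum.swap)
  also have "\<dots> = (\<Sum>j<n. m j * p $ j * (\<Sum>i<n. Y $$ (j,i) * q $ i))"
    by (simp add: sum_distrib_left sum_distrib_right ac_simps)
  also have "\<dots> = Bf n m p (Y *\<^sub>v q)"
    unfolding Bf_def by (intro sum.cong refl) (use mat_vec_nth_sum[OF Y q] in simp)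
  finally show ?thesis .
qed

lemma smult_zero_imp:
  fixes u :: "'a::field vec"
  assumes "u \<in> carrier_vec n" "u \<noteq> 0\<^sub>v n" "a \<cdot>\<^sub>v u = 0\<^sub>v n"
  shows "a = 0"
proof -
  obtain i where i: "i < n" "u $ i \<noteq> 0" using assms(1,2) by (metis carrier_vecD eq_vecI index_zero_vec)
  have "(a \<cdot>\<^sub>v u) $ i = 0" using assms(3) i by simp
  then show ?thesis using i assms(1) by simp
qed

lemma mat_vec_zero: "(A :: 'a::comm_ring_1 mat) \<in> carrier_mat m n \<Longrightarrow> A *\<^sub>v 0\<^sub>v n = 0\<^sub>v m"
  by (rule eq_vecI) (auto simp: mult_mat_vec_def scalar_prod_def)

lemma U_vec:
  fixes u :: "nat \<Rightarrow> 'a::comm_ring_1 vec"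
  assumes u: "\<And>s. s < n \<Longrightarrow> u s \<in> carrier_vec n" and c: "c \<in> carrier_vec n"
  shows "mat n n (\<lambda>(i,s). u s $ i) *\<^sub>v c = vec n (\<lambda>i. \<Sum>s<n. c $ s * u s $ i)"
proof -
  have "1\<^sub>m n *\<^sub>v (mat n n (\<lambda>(i,s). u s $ i) *\<^sub>v c) = vec n (\<lambda>i. \<Sum>s<n. c $ s * (1\<^sub>m n *\<^sub>v u s) $ i)"
    by (rule mat_vec_cols[OF one_carrier_mat u c])
  also have "\<dots> = vec n (\<lambda>i. \<Sum>s<n. c $ s * u s $ i)"
    using u by (intro eq_vecI sum.cong refl) auto
  finally have h: "1\<^sub>m n *\<^sub>v (mat n n (\<lambda>(i,s). u s $ i) *\<^sub>v c) = vec n (\<lambda>i. \<Sum>s<n. c $ s * u s $ i)" .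
  have cU: "mat n n (\<lambda>(i,s). u s $ i) *\<^sub>v c \<in> carrier_vec n"
    by (rule mult_mat_vec_carrier[OF _ c]) simp
  show ?thesis using h one_mult_mat_vec[OF cU] by simp
qed

lemma zero_mat_vec: "(v :: 'a::comm_ring_1 vec) \<in> carrier_vec n \<Longrightarrow> 0\<^sub>m m n *\<^sub>v v = 0\<^sub>v m"
  by (rule eq_vecI) (auto simp: mult_mat_vec_def scalar_prod_def)

lemma mult_cols_entry:
  fixes M :: "'a::comm_ring_1 mat"
  assumes M: "M \<in> carrier_mat n n" and v: "\<And>s. s < n \<Longrightarrow> v s \<in> carrier_vec n" and r: "r < n" and j: "j < n"
  shows "(M * mat n n (\<lambda>(r,j). v j $ r)) $$ (r,j) = (M *\<^sub>v v j) $ r"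
proof -
  have "col (mat n n (\<lambda>(r,j). v j $ r)) j = v j" using v[OF j] j by (intro eq_vecI) auto
  then show ?thesis using M r j by (simp add: mult_mat_vec_def)
qed

lemma mult_W_right_entry:
  fixes N :: "'a::comm_ring_1 mat"
  assumes N: "N \<in> carrier_mat n n" and r: "r < n" and j: "j < n"
  shows "(mat n n (\<lambda>(r,j). v j $ r) * N) $$ (r,j) = (\<Sum>k<n. v k $ r * N $$ (k,j))"
  using N r j by (simp add: scalar_prod_def lessThan_atLeast0)

lemma mtrace_comm:
  fixes P Q :: "'a::comm_ring_1 mat"
  assumes "P \<in> carrier_mat n m" "Q \<in> carrier_mat m n"
  shows "mtrace (P * Q) = mtrace (Q * P)"
proof -
  have "mtrace (P * Q) = (\<Sum>i<n. \<Sum>k<m. P $$ (i,k) * Q $$ (k,i))"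
    unfolding mtrace_def using assms by (simp add: scalar_prod_def lessThan_atLeast0)
  also have "\<dots> = (\<Sum>k<m. \<Sum>i<n. Q $$ (k,i) * P $$ (i,k))" by (subst sum.swap) (simp add: ac_simps)
  also have "\<dots> = mtrace (Q * P)"
    unfolding mtrace_def using assms by (simp add: scalar_prod_def lessThan_atLeast0)
  finally show ?thesis .
qed

lemma tri_sum:
  fixes Y :: "nat \<Rightarrow> nat \<Rightarrow> 'a::comm_ring_1"
  assumes z: "\<forall>j<Suc d. j \<noteq> i + 1 \<and> i \<noteq> j + 1 \<longrightarrow> Y i j = 0" and i: "0 < i" "i < d"
  shows "(\<Sum>j<Suc d. Y i j * f j) = Y i (i-1) * f (i-1) + Y i (i+1) * f (i+1)"
proof -
  have "(\<Sum>j<Suc d. Y i j * f j) = (\<Sum>j\<in>{i-1, i+1}. Y i j * f j)"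
    by (rule sum.mono_neutral_right) (use z i in auto)
  then show ?thesis using i by simp
qed

lemma tri_sum0:
  fixes Y :: "nat \<Rightarrow> nat \<Rightarrow> 'a::comm_ring_1"
  assumes z: "\<forall>j<Suc d. j \<noteq> 0 + 1 \<and> 0 \<noteq> j + 1 \<longrightarrow> Y 0 j = 0" and d: "0 < d"
  shows "(\<Sum>j<Suc d. Y 0 j * f j) = Y 0 1 * f 1"
proof -
  have "(\<Sum>j<Suc d. Y 0 j * f j) = (\<Sum>j\<in>{1}. Y 0 j * f j)"
    by (rule sum.mono_neutral_right) (use z d in auto)
  then show ?thesis by simp
qed

lemma Dg_left:
  fixes M :: "'a::comm_ring_1 mat"
  assumes M: "M \<in> carrier_mat n n" and i: "i < n"
  shows "mat n n (\<lambda>(a,b). if a = i \<and> b = i then 1 else 0) * M = mat n n (\<lambda>(a,b). if a = i then M $$ (i,b) else 0)"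
proof (rule eq_matI)
  fix a b assume ab: "a < dim_row (mat n n (\<lambda>(a,b). if a = i then M $$ (i,b) else 0))"
    "b < dim_col (mat n n (\<lambda>(a,b). if a = i then M $$ (i,b) else (0::'a)))"
  then have a: "a < n" and b: "b < n" by auto
  have "(mat n n (\<lambda>(a,b). if a = i \<and> b = i then 1 else 0) * M) $$ (a,b)
      = (\<Sum>k<n. (if a = i \<and> k = i then 1 else 0) * M $$ (k,b))"
    using M a b by (simp add: scalar_prod_def lessThan_atLeast0)
  also have "\<dots> = (\<Sum>k<n. if k = i then (if a = i then M $$ (i,b) else 0) else 0)"
    by (intro sum.cong refl) auto
  also have "\<dots> = (if a = i then M $$ (i,b) else 0)" using i by simp
  finally show "(mat n n (\<lambda>(a,b). if a = i \<and> b = i then 1 else 0) * M) $$ (a,b)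
     = mat n n (\<lambda>(a,b). if a = i then M $$ (i,b) else 0) $$ (a,b)" using a b by simp
qed (use M in auto)

lemma Dg_right:
  fixes M :: "'a::comm_ring_1 mat"
  assumes M: "M \<in> carrier_mat n n" and j: "j < n"
  shows "M * mat n n (\<lambda>(a,b). if a = j \<and> b = j then 1 else 0) = mat n n (\<lambda>(a,b). if b = j then M $$ (a,j) else 0)"
proof (rule eq_matI)
  fix a b assume ab: "a < dim_row (mat n n (\<lambda>(a,b). if b = j then M $$ (a,j) else 0))"
    "b < dim_col (mat n n (\<lambda>(a,b). if b = j then M $$ (a,j) else (0::'a)))"
  then have a: "a < n" and b: "b < n" by auto
  have "(M * mat n n (\<lambda>(a,b). if a = j \<and> b = j then 1 else 0)) $$ (a,b)
      = (\<Sum>k<n. M $$ (a,k) * (if k = j \<and> b = j then 1 else 0))"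
    using M a b by (simp add: scalar_prod_def lessThan_atLeast0)
  also have "\<dots> = (\<Sum>k<n. if k = j then (if b = j then M $$ (a,j) else 0) else 0)"
    by (intro sum.cong refl) auto
  also have "\<dots> = (if b = j then M $$ (a,j) else 0)" using j by simp
  finally show "(M * mat n n (\<lambda>(a,b). if a = j \<and> b = j then 1 else 0)) $$ (a,b)
     = mat n n (\<lambda>(a,b). if b = j then M $$ (a,j) else 0) $$ (a,b)" using a b by simp
qed (use M in auto)



lemma final_alg:
  fixes c b x :: "nat \<Rightarrow> 'a::field" and d :: nat and ta tb rk rl rq :: 'a
  assumes d3: "d \<ge> 3"
    and b0: "b 0 \<noteq> 0" and bnz: "\<forall>i. 0 < i \<and> i < d \<longrightarrow> b i \<noteq> 0"
    and row0: "b 0 = ta" and row: "\<forall>i. 0 < i \<and> i < d \<longrightarrow> c i + b i = ta"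
    and eig0: "b 0 * x 1 = tb * x 0"
    and eig: "\<forall>i. 0 < i \<and> i < d \<longrightarrow> c i * x (i-1) + b i * x (i+1) = tb * x i"
    and sq0: "b 0 * (x 1)^2 = rq * (x 0)^2 + rl * x 0 + rk"
    and sq: "\<forall>i. 0 < i \<and> i < d \<longrightarrow> c i * (x (i-1))^2 + b i * (x (i+1))^2 = rq * (x i)^2 + rl * x i + rk"
    and inj: "inj_on x {..d}"
  shows "\<exists>\<beta> e. \<forall>i. 1 \<le> i \<and> i \<le> d - 1 \<longrightarrow> x (i - 1) - \<beta> * x i + x (i + 1) = e"
proof -
  have ta: "ta \<noteq> 0" using b0 row0 by simp
  have x13: "x 1 \<noteq> x 3" using inj_onD[OF inj, of 1 3] d3 by auto
  have x02: "x 0 \<noteq> x 2" using inj_onD[OF inj, of 0 2] d3 by auto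
  have tb: "tb \<noteq> 0"
  proof
    assume "tb = 0"
    then have "x 1 = 0" using eig0 b0 by simp
    moreover have "c 2 * x 1 + b 2 * x 3 = tb * x 2" using eig[rule_format, of 2] d3 by simp
    moreover have "b 2 \<noteq> 0" using bnz d3 by simp
    ultimately show False using x13 \<open>tb = 0\<close> by simp
  qed
  have t01: "ta + tb \<noteq> 0"
  proof
    assume h: "ta + tb = 0"
    then have "tb = - ta" by (simp add: eq_neg_iff_add_eq_0 add.commute)
    then have "ta * x 1 = ta * (- x 0)" using eig0 row0 by simp
    then have x1: "x 1 = - x 0" using ta by (metis mult_left_cancel)
    have e1: "c 1 * x 0 + b 1 * x 2 = tb * x 1" using eig[rule_format, of 1] d3 by (simp add: numeral_2_eq_2)
    have rl': "c 1 + b 1 = ta" using row d3 by simp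
    have "b 1 * x 2 = b 1 * x 0" using e1 x1 \<open>tb = - ta\<close> rl'[symmetric]
      by (simp add: algebra_simps)
    then show False using bnz d3 x02 by simp
  qed
  define \<sigma> where "\<sigma> = ta * (rq + ta) / tb"
  define L where "L = - rl * ta / (ta + tb)"
  define K where "K = rk"
  define P where "P = (\<lambda>a bb. ta * a^2 + ta * bb^2 - \<sigma> * a * bb + L * (a + bb))"
  have keyR: "\<And>y. ta * (rq * y^2 + rl * y + rk) = - (ta * (ta * y^2 + L * y - K)) + tb * y * (\<sigma> * y - L)"
  proof -
    fix y
    have s1: "tb * \<sigma> = ta * rq + ta * ta" unfolding \<sigma>_def using tb by (simp add: field_simps)
    have s2': "L * (ta + tb) = - rl * ta" unfolding L_def using t01 by simp
    have s2: "L * ta + L * tb = - rl * ta" using s2' by (simp add: distrib_left)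
    have "- (ta * (ta * y^2 + L * y - K)) + tb * y * (\<sigma> * y - L) = y^2 * (tb * \<sigma>) - ta * ta * y^2 - y * (L * ta + L * tb) + ta * K"
      by (simp add: algebra_simps power2_eq_square)
    also have "\<dots> = ta * (rq * y^2 + rl * y + rk)" unfolding s1 s2 K_def by (simp add: algebra_simps)
    finally show "ta * (rq * y^2 + rl * y + rk) = - (ta * (ta * y^2 + L * y - K)) + tb * y * (\<sigma> * y - L)" by simp
  qed
  have base: "P (x 0) (x 1) = K"
  proof -
    have "ta * (ta * (x 1)^2) = ta * (rq * (x 0)^2 + rl * x 0 + rk)" using sq0 row0 by simp
    also have "\<dots> = - (ta * (ta * (x 0)^2 + L * (x 0) - K)) + tb * x 0 * (\<sigma> * x 0 - L)" by (rule keyR)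
    also have "tb * x 0 = ta * x 1" using eig0 row0 by simp
    finally have "ta * (ta * (x 1)^2) = ta * (- (ta * (x 0)^2 + L * x 0 - K) + x 1 * (\<sigma> * x 0 - L))"
      by (simp add: algebra_simps)
    then have "ta * (x 1)^2 = - (ta * (x 0)^2 + L * x 0 - K) + x 1 * (\<sigma> * x 0 - L)" using ta by simp
    then show ?thesis unfolding P_def by (simp add: algebra_simps)
  qed
  have step: "P (x (i-1)) (x i) = K \<Longrightarrow> 0 < i \<Longrightarrow> i < d \<Longrightarrow>
      ta * (x (i-1) + x (i+1)) = \<sigma> * x i - L \<and> P (x i) (x (i+1)) = K" for i
  proof -
    assume PK: "P (x (i-1)) (x i) = K" and i: "0 < i" "i < d"
    define u where "u = x (i-1)" define y where "y = x i" define w where "w = x (i+1)"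
    have R: "c i + b i = ta" "c i * u + b i * w = tb * y" "c i * u^2 + b i * w^2 = rq * y^2 + rl * y + rk"
      using row eig sq i unfolding u_def y_def w_def by auto
    have "ta * u * w - tb * y * (u + w) + (rq * y^2 + rl * y + rk) =
       (c i + b i) * u * w - (c i * u + b i * w) * (u + w) + (c i * u^2 + b i * w^2)"
      using R by simp
    also have "\<dots> = 0" by (simp add: algebra_simps power2_eq_square)
    finally have F: "ta * u * w - tb * y * (u + w) + (rq * y^2 + rl * y + rk) = 0" .
    have PK': "ta * u^2 + ta * y^2 - \<sigma> * u * y + L * (u + y) = K" using PK unfolding P_def u_def y_def .
    define u' where "u' = (\<sigma> * y - L) / ta - u"
    have su: "ta * u + ta * u' = \<sigma> * y - L" unfolding u'_def using ta by (simp add: field_simps)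
    have uu: "ta * u * u' = ta * y^2 + L * y - K"
    proof -
      have "ta * u * u' = u * (ta * u + ta * u') - ta * u^2" by (simp add: algebra_simps power2_eq_square)
      also have "\<dots> = u * (\<sigma> * y - L) - ta * u^2" using su by simp
      also have "\<dots> = ta * y^2 + L * y - K" using PK' by (simp add: algebra_simps)
      finally show ?thesis .
    qed
    have F': "ta * u * u' - tb * y * (u + u') + (rq * y^2 + rl * y + rk) = 0"
    proof -
      have "ta * (ta * u * u' - tb * y * (u + u') + (rq * y^2 + rl * y + rk))
          = ta * (ta * u * u') - tb * y * (ta * u + ta * u') + ta * (rq * y^2 + rl * y + rk)"
        by (simp add: algebra_simps)
      also have "\<dots> = 0" unfolding su uu keyR by (simp add: algebra_simps)
      finally show ?thesis using ta by simp
    qed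
    have uw: "u \<noteq> w"
    proof
      assume "u = w"
      then have "i - 1 = i + 1" using inj_onD[OF inj, of "i-1" "i+1"] i unfolding u_def w_def by auto
      then show False using i by simp
    qed
    have ne: "ta * u - tb * y \<noteq> 0"
    proof
      assume "ta * u - tb * y = 0"
      then have "c i * u + b i * w = (c i + b i) * u" using R by simp
      then have "b i * (w - u) = 0" by (simp add: algebra_simps)
      then show False using bnz i uw by simp
    qed
    have "(ta * u - tb * y) * (w - u') = (ta * u * w - tb * y * (u + w) + (rq * y^2 + rl * y + rk))
        - (ta * u * u' - tb * y * (u + u') + (rq * y^2 + rl * y + rk))" by (simp add: algebra_simps)
    then have "(ta * u - tb * y) * (w - u') = 0" unfolding F F' by simp
    then have wu: "w = u'" using ne by simp
    have rec: "ta * (u + w) = \<sigma> * y - L" using su wu by (simp add: algebra_simps)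
    have e1: "\<sigma> * y * w = (ta * (u + w) + L) * w" using rec by simp
    have "P y w = ta * y^2 + L * y - ta * u * w"
      unfolding P_def using e1 by (simp add: algebra_simps power2_eq_square)
    also have "\<dots> = K" using uu wu by simp
    finally show ?thesis using rec unfolding u_def y_def w_def by simp
  qed
  have all: "\<forall>i. i < d \<longrightarrow> P (x i) (x (i+1)) = K"
  proof (intro allI)
    fix i show "i < d \<longrightarrow> P (x i) (x (i+1)) = K"
    proof (induction i)
      case 0 then show ?case using base by simp
    next
      case (Suc j)
      show ?case
      proof
        assume "Suc j < d"
        then have "P (x (Suc j - 1)) (x (Suc j)) = K" using Suc by simp
        from step[OF this] \<open>Suc j < d\<close> show "P (x (Suc j)) (x (Suc j + 1)) = K" by simp
      qed
    qed
  qed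
  show ?thesis
  proof (intro exI allI impI)
    fix i assume i: "1 \<le> i \<and> i \<le> d - 1"
    have "P (x (i-1)) (x i) = K" proof -
      have "i - 1 < d" using i d3 by linarith
      then show ?thesis using all[rule_format, of "i-1"] i by simp
    qed
    from step[OF this] i d3 have "ta * (x (i-1) + x (i+1)) = \<sigma> * x i - L" by auto
    then have "x (i-1) + x (i+1) = (\<sigma> * x i - L) / ta" using ta by (simp add: eq_divide_eq mult.commute)
    then have "x (i-1) + x (i+1) = \<sigma> / ta * x i - L / ta" by (simp add: diff_divide_distrib)
    then show "x (i - 1) - \<sigma> / ta * x i + x (i + 1) = - L / ta" by (simp add: algebra_simps)
  qed
qed


lemma coord:
  fixes Ym :: "'a::field mat" and d k :: nat and th ts :: "nat \<Rightarrow> 'a" and F :: "nat \<Rightarrow> 'a mat"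
  assumes d3: "d \<ge> 3"
    and Ym: "Ym \<in> carrier_mat (Suc d) (Suc d)"
    and tz: "\<forall>i<Suc d. \<forall>j<Suc d. j \<noteq> i + 1 \<and> i \<noteq> j + 1 \<longrightarrow> Ym $$ (i,j) = 0"
    and tnz: "\<forall>i<d. Ym $$ (i, i+1) \<noteq> 0 \<and> Ym $$ (i+1, i) \<noteq> 0"
    and rows: "Ym *\<^sub>v vec (Suc d) (\<lambda>_. 1) = th 0 \<cdot>\<^sub>v vec (Suc d) (\<lambda>_. 1)"
    and thinj: "inj_on th {..d}"
    and eigs: "\<forall>s\<le>d. \<exists>x\<in>carrier_vec (Suc d). x \<noteq> 0\<^sub>v (Suc d) \<and> Ym *\<^sub>v x = th s \<cdot>\<^sub>v x"
    and prim: "\<forall>s\<le>d. primitive_idem (Suc d) d Ym th s (F s)"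
    and tsinj: "inj_on ts {..d}"
    and tl0: "\<forall>s\<le>d. s \<noteq> 0 \<longrightarrow> s \<noteq> 1 \<longrightarrow> F 0 * mat (Suc d) (Suc d) (\<lambda>(a,b). if a = b then ts a else 0) * F s = 0\<^sub>m (Suc d) (Suc d)"
    and k: "k \<le> d"
    and tl1: "\<forall>s\<le>d. s \<noteq> 0 \<longrightarrow> s \<noteq> 1 \<longrightarrow> s \<noteq> k \<longrightarrow> F 1 * mat (Suc d) (Suc d) (\<lambda>(a,b). if a = b then ts a else 0) * F s = 0\<^sub>m (Suc d) (Suc d)"
  shows "\<exists>x a b r0 r1 r2. x \<in> carrier_vec (Suc d) \<and> Ym *\<^sub>v x = th 1 \<cdot>\<^sub>v x \<and> (\<forall>i\<le>d. ts i = a + b * x $ i)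
     \<and> (\<forall>i<Suc d. (Ym *\<^sub>v vec (Suc d) (\<lambda>j. (x $ j)^2)) $ i = r2 * (x $ i)^2 + r1 * x $ i + r0)"
proof -
  let ?n = "Suc d"
  define one :: "'a vec" where "one = vec ?n (\<lambda>_. 1)"
  define Dm where "Dm = mat ?n ?n (\<lambda>(a,b). if a = b then ts a else 0)"
  have Dm: "Dm \<in> carrier_mat ?n ?n" unfolding Dm_def by simp
  define u where "u s = (if s = 0 then one else (SOME x. x \<in> carrier_vec ?n \<and> x \<noteq> 0\<^sub>v ?n \<and> Ym *\<^sub>v x = th s \<cdot>\<^sub>v x))" for s
  have u: "u s \<in> carrier_vec ?n \<and> u s \<noteq> 0\<^sub>v ?n \<and> Ym *\<^sub>v u s = th s \<cdot>\<^sub>v u s" if s: "s \<le> d" for s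
  proof (cases "s = 0")
    case True
    have "one $ 0 \<noteq> (0\<^sub>v ?n) $ 0" unfolding one_def by simp
    then have "one \<noteq> 0\<^sub>v ?n" by metis
    then show ?thesis using True rows unfolding u_def one_def by simp
  next
    case False
    have ex: "\<exists>x. x \<in> carrier_vec ?n \<and> x \<noteq> 0\<^sub>v ?n \<and> Ym *\<^sub>v x = th s \<cdot>\<^sub>v x"
      using eigs[rule_format, OF s] by blast
    show ?thesis unfolding u_def using False someI_ex[OF ex] by simp
  qed
  have uc: "u s \<in> carrier_vec ?n" if "s < ?n" for s using u that by simp
  have Fc: "F s \<in> carrier_mat ?n ?n" if "s \<le> d" for s using prim that unfolding primitive_idem_def by simp
  have Fu: "F r *\<^sub>v u s = (if r = s then u s else 0\<^sub>v ?n)" if "r \<le> d" "s \<le> d" for r s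
    using prim[rule_format, OF that(1)] u[OF that(2)] that unfolding primitive_idem_def by auto
  define U where "U = mat ?n ?n (\<lambda>(i,s). u s $ i)"
  have Uc: "U \<in> carrier_mat ?n ?n" unfolding U_def by simp
  have FU: "F r *\<^sub>v (U *\<^sub>v c) = c $ r \<cdot>\<^sub>v u r" if r: "r \<le> d" and c: "c \<in> carrier_vec ?n" for r c
  proof -
    have "F r *\<^sub>v (U *\<^sub>v c) = vec ?n (\<lambda>i. \<Sum>s<?n. c $ s * (F r *\<^sub>v u s) $ i)"
      unfolding U_def by (rule mat_vec_cols[OF Fc[OF r] uc c])
    also have "\<dots> = vec ?n (\<lambda>i. c $ r * u r $ i)"
    proof (rule eq_vecI)
      fix i assume "i < dim_vec (vec ?n (\<lambda>i. c $ r * u r $ i))"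
      then have i: "i < ?n" by simp
      have "(\<Sum>s<?n. c $ s * (F r *\<^sub>v u s) $ i) = (\<Sum>s<?n. if s = r then c $ r * u r $ i else 0)"
        by (rule sum.cong[OF refl]) (use Fu r uc i in auto)
      also have "\<dots> = c $ r * u r $ i" using r by simp
      finally show "vec ?n (\<lambda>i. \<Sum>s<?n. c $ s * (F r *\<^sub>v u s) $ i) $ i = vec ?n (\<lambda>i. c $ r * u r $ i) $ i"
        using i by simp
    qed simp
    also have "\<dots> = c $ r \<cdot>\<^sub>v u r" using r uc[of r] by (intro eq_vecI) auto
    finally show ?thesis .
  qed
  have Uinj: "c = 0\<^sub>v ?n" if c: "c \<in> carrier_vec ?n" and z: "U *\<^sub>v c = 0\<^sub>v ?n" for c
  proof (rule eq_vecI)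
    fix r assume "r < dim_vec (0\<^sub>v ?n)"
    then have r: "r \<le> d" by simp
    have "c $ r \<cdot>\<^sub>v u r = 0\<^sub>v ?n" using FU[OF r c] z mat_vec_zero[OF Fc[OF r]] by simp
    then have "c $ r = 0" using u[OF r] smult_zero_imp by blast
    then show "c $ r = 0\<^sub>v ?n $ r" using r by simp
  qed (use c in simp)
  obtain Ui where Ui: "Ui \<in> carrier_mat ?n ?n" "Ui * U = 1\<^sub>m ?n" "U * Ui = 1\<^sub>m ?n"
    using inv_of_inj[OF Uc Uinj] by blast
  have span: "p = U *\<^sub>v (Ui *\<^sub>v p)" if p: "p \<in> carrier_vec ?n" for p
  proof -
    have "U *\<^sub>v (Ui *\<^sub>v p) = (U * Ui) *\<^sub>v p" using assoc_mult_mat_vec[OF Uc Ui(1) p] by simp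
    then show ?thesis using Ui p by simp
  qed
  have Uic: "Ui *\<^sub>v p \<in> carrier_vec ?n" if "p \<in> carrier_vec ?n" for p using Ui that by simp
  define m where "m i = (\<Prod>k<i. Ym $$ (k, k+1) / Ym $$ (k+1, k))" for i
  have mnz: "m i \<noteq> 0" if "i \<le> d" for i
    unfolding m_def using tnz that by (simp add: prod_zero_iff)
  have msuc: "m (Suc i) * Ym $$ (i+1, i) = m i * Ym $$ (i, i+1)" if "i < d" for i
    unfolding m_def using tnz that by simp
  have msym: "m i * Ym $$ (i,j) = m j * Ym $$ (j,i)" if "i < ?n" "j < ?n" for i j
  proof -
    consider "j = i + 1" | "i = j + 1" | "j \<noteq> i + 1 \<and> i \<noteq> j + 1" by blast
    then show ?thesis
    proof cases
      case 1 then show ?thesis using msuc[of i] that by simp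
    next
      case 2 then show ?thesis using msuc[of j] that by simp
    next
      case 3 then show ?thesis using tz that by auto
    qed
  qed
  have Bsym: "Bf ?n m (Ym *\<^sub>v p) q = Bf ?n m p (Ym *\<^sub>v q)" if "p \<in> carrier_vec ?n" "q \<in> carrier_vec ?n" for p q
    by (rule Bf_sym_mat[OF Ym msym that])
  have Dmv: "Dm *\<^sub>v p = vec ?n (\<lambda>i. ts i * p $ i)" if p: "p \<in> carrier_vec ?n" for p
  proof (rule eq_vecI)
    fix i assume "i < dim_vec (vec ?n (\<lambda>i. ts i * p $ i))"
    then have i: "i < ?n" by simp
    have "(Dm *\<^sub>v p) $ i = (\<Sum>j<?n. Dm $$ (i,j) * p $ j)" by (rule mat_vec_nth_sum[OF Dm p i])
    also have "\<dots> = (\<Sum>j<?n. if j = i then ts i * p $ i else 0)"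
      by (rule sum.cong[OF refl]) (use i in \<open>auto simp: Dm_def\<close>)
    also have "\<dots> = ts i * p $ i" using i by simp
    finally show "(Dm *\<^sub>v p) $ i = vec ?n (\<lambda>i. ts i * p $ i) $ i" using i by simp
  qed (use Dm in simp)
  have BDm: "Bf ?n m (Dm *\<^sub>v p) q = Bf ?n m p (Dm *\<^sub>v q)" if "p \<in> carrier_vec ?n" "q \<in> carrier_vec ?n" for p q
    unfolding Bf_def Dmv[OF that(1)] Dmv[OF that(2)] by (intro sum.cong refl) simp
  have orth: "Bf ?n m (u r) (u s) = 0" if rs: "r \<le> d" "s \<le> d" "r \<noteq> s" for r s
  proof -
    have "th r * Bf ?n m (u r) (u s) = Bf ?n m (Ym *\<^sub>v u r) (u s)"
      using u[OF rs(1)] by (simp add: Bf_smult)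
    also have "\<dots> = Bf ?n m (u r) (Ym *\<^sub>v u s)" using Bsym u rs by blast
    also have "\<dots> = th s * Bf ?n m (u r) (u s)"
      using u[OF rs(2)] Bf_comm[of ?n m "u r"] by (simp add: Bf_smult)
    finally have "(th r - th s) * Bf ?n m (u r) (u s) = 0" by (simp add: algebra_simps)
    moreover have "th r \<noteq> th s" using inj_onD[OF thinj, of r s] rs by auto
    ultimately show ?thesis by simp
  qed
  have coefB: "Bf ?n m (U *\<^sub>v c) (u s) = c $ s * Bf ?n m (u s) (u s)" if c: "c \<in> carrier_vec ?n" and s: "s \<le> d" for c s
  proof -
    have "Bf ?n m (U *\<^sub>v c) (u s) = (\<Sum>t<?n. c $ t * Bf ?n m (u t) (u s))"
      unfolding U_def by (rule Bf_U[OF uc c])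
    also have "\<dots> = (\<Sum>t<?n. if t = s then c $ s * Bf ?n m (u s) (u s) else 0)"
      by (rule sum.cong[OF refl]) (use orth s in auto)
    also have "\<dots> = c $ s * Bf ?n m (u s) (u s)" using s by simp
    finally show ?thesis .
  qed
  have gnz: "Bf ?n m (u s) (u s) \<noteq> 0" if s: "s \<le> d" for s
  proof
    assume g0: "Bf ?n m (u s) (u s) = 0"
    have "u s = 0\<^sub>v ?n"
    proof (rule eq_vecI)
      fix i assume "i < dim_vec (0\<^sub>v ?n :: 'a vec)"
      then have i: "i < ?n" by simp
      let ?p = "unit_vec ?n i :: 'a vec"
      have "Bf ?n m ?p (u s) = Bf ?n m (U *\<^sub>v (Ui *\<^sub>v ?p)) (u s)" using span[of ?p] by simp
      also have "\<dots> = 0" using coefB[OF Uic[of ?p] s] g0 by simp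
      finally have z: "Bf ?n m ?p (u s) = 0" .
      have "Bf ?n m ?p (u s) = (\<Sum>j<?n. if j = i then m i * (u s) $ i else 0)"
        unfolding Bf_def by (rule sum.cong[OF refl]) (use i in \<open>auto simp: unit_vec_def\<close>)
      also have "\<dots> = m i * (u s) $ i" using i by simp
      finally have "m i * (u s) $ i = 0" using z by simp
      then show "u s $ i = 0\<^sub>v ?n $ i" using mnz[of i] i by simp
    qed (use u[OF s] in simp)
    then show False using u[OF s] by simp
  qed
  have ttr: "Bf ?n m (Dm *\<^sub>v u r) (u s) = 0" if rs: "r \<le> d" "s \<le> d" and z: "F r * Dm * F s = 0\<^sub>m ?n ?n" for r s
  proof -
    let ?q = "Dm *\<^sub>v u s"
    have qc: "?q \<in> carrier_vec ?n" using Dm uc rs by simp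
    have "F r *\<^sub>v ?q = F r *\<^sub>v (Dm *\<^sub>v (F s *\<^sub>v u s))" using Fu rs by simp
    also have "\<dots> = (F r * Dm * F s) *\<^sub>v u s"
      using assoc_mult_mat_vec[OF Fc[OF rs(1)] Dm mult_mat_vec_carrier[OF Fc[OF rs(2)] uc]]
        assoc_mult_mat_vec[OF mult_carrier_mat[OF Fc[OF rs(1)] Dm] Fc[OF rs(2)] uc] rs by simp
    also have "\<dots> = 0\<^sub>v ?n" using z zero_mat_vec[OF uc[of s]] rs by simp
    finally have Fq: "F r *\<^sub>v ?q = 0\<^sub>v ?n" .
    define c where "c = Ui *\<^sub>v ?q"
    have cc: "c \<in> carrier_vec ?n" unfolding c_def using Uic qc by simp
    have qU: "?q = U *\<^sub>v c" unfolding c_def using span qc by simp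
    have "c $ r \<cdot>\<^sub>v u r = 0\<^sub>v ?n" using FU[OF rs(1) cc] Fq qU by simp
    then have cr: "c $ r = 0" using u[OF rs(1)] smult_zero_imp by blast
    have "Bf ?n m ?q (u r) = 0" using coefB[OF cc rs(1)] qU cr by simp
    then have "Bf ?n m (u s) (Dm *\<^sub>v u r) = 0" using BDm uc rs by (simp add: Bf_comm)
    then show ?thesis using BDm uc rs by (simp add: Bf_comm)
  qed
  have n2: "2 \<le> ?n" using d3 by simp
  define x where "x = u 1"
  have xc: "x \<in> carrier_vec ?n" and xe: "Ym *\<^sub>v x = th 1 \<cdot>\<^sub>v x" unfolding x_def using u[of 1] d3 by auto
  have u0: "u 0 = one" unfolding u_def by simp
  have Uexp: "(U *\<^sub>v c) $ i = (\<Sum>s<?n. c $ s * u s $ i)" if "c \<in> carrier_vec ?n" "i < ?n" for c i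
    unfolding U_def using U_vec[OF uc that(1)] that(2) by simp
  define tv where "tv = Dm *\<^sub>v u 0"
  have tvc: "tv \<in> carrier_vec ?n" unfolding tv_def using Dm uc[of 0] by simp
  have tvi: "tv $ i = ts i" if "i < ?n" for i
    unfolding tv_def u0 using Dmv[of one] that by (simp add: one_def)
  define c where "c = Ui *\<^sub>v tv"
  have cc: "c \<in> carrier_vec ?n" unfolding c_def using Uic tvc by simp
  have tvU: "tv = U *\<^sub>v c" unfolding c_def using span tvc by simp
  have cs0: "c $ s = 0" if s: "s \<le> d" "s \<noteq> 0" "s \<noteq> 1" for s
  proof -
    have "c $ s * Bf ?n m (u s) (u s) = Bf ?n m tv (u s)" using coefB[OF cc s(1)] tvU by simp
    also have "\<dots> = 0" unfolding tv_def by (rule ttr) (use s tl0 Dm_def in auto)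
    finally show ?thesis using gnz[OF s(1)] by simp
  qed
  define a where "a = c $ 0"
  define b where "b = c $ 1"
  have tsx: "ts i = a + b * x $ i" if i: "i \<le> d" for i
  proof -
    have "ts i = (\<Sum>s<?n. c $ s * u s $ i)" using tvi[of i] Uexp[OF cc, of i] tvU i by simp
    also have "\<dots> = c $ 0 * u 0 $ i + c $ 1 * u 1 $ i"
      by (rule sum_two[OF n2]) (use cs0 in simp)
    finally show ?thesis unfolding a_def b_def x_def u0 one_def using i by simp
  qed
  have bnz: "b \<noteq> 0"
  proof
    assume "b = 0"
    then have "ts 0 = ts 1" using tsx[of 0] tsx[of 1] d3 by simp
    then show False using inj_onD[OF tsinj, of 0 1] d3 by simp
  qed
  define sq where "sq = vec ?n (\<lambda>j. (x $ j)^2)"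
  have sqc: "sq \<in> carrier_vec ?n" unfolding sq_def by simp
  have Bsq: "Bf ?n m sq (u s) = 0" if s: "s \<le> d" "s \<noteq> 0" "s \<noteq> 1" "s \<noteq> k" for s
  proof -
    have z: "Bf ?n m (Dm *\<^sub>v x) (u s) = 0" unfolding x_def by (rule ttr) (use s tl1 Dm_def d3 in auto)
    have "Bf ?n m (Dm *\<^sub>v x) (u s) = a * Bf ?n m x (u s) + b * Bf ?n m sq (u s)"
    proof -
      have "Bf ?n m (Dm *\<^sub>v x) (u s) = (\<Sum>i<?n. a * (m i * x $ i * u s $ i) + b * (m i * sq $ i * u s $ i))"
        unfolding Bf_def Dmv[OF xc]
      proof (rule sum.cong[OF refl])
        fix i assume "i \<in> {..<?n}"
        then have i: "i < ?n" by simp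
        have "m i * vec ?n (\<lambda>i. ts i * x $ i) $ i * u s $ i = m i * ((a + b * x $ i) * x $ i) * u s $ i"
          using i tsx[of i] by simp
        also have "\<dots> = a * (m i * x $ i * u s $ i) + b * (m i * sq $ i * u s $ i)"
          unfolding sq_def using i by (simp add: algebra_simps power2_eq_square)
        finally show "m i * vec ?n (\<lambda>i. ts i * x $ i) $ i * u s $ i = a * (m i * x $ i * u s $ i) + b * (m i * sq $ i * u s $ i)" .
      qed
      also have "\<dots> = a * Bf ?n m x (u s) + b * Bf ?n m sq (u s)"
        unfolding Bf_def sum.distrib sum_distrib_left by (rule refl)
      finally show ?thesis .
    qed
    moreover have "Bf ?n m x (u s) = 0" unfolding x_def using orth[of 1 s] s d3 by simp
    ultimately show ?thesis using z bnz by simp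
  qed
  define e where "e = Ui *\<^sub>v sq"
  have ec: "e \<in> carrier_vec ?n" unfolding e_def using Uic sqc by simp
  have sqU: "sq = U *\<^sub>v e" unfolding e_def using span sqc by simp
  have es0: "e $ s = 0" if s: "s \<le> d" "s \<noteq> 0" "s \<noteq> 1" "s \<noteq> k" for s
  proof -
    have "e $ s * Bf ?n m (u s) (u s) = Bf ?n m sq (u s)" using coefB[OF ec s(1)] sqU by simp
    also have "\<dots> = 0" by (rule Bsq[OF s])
    finally show ?thesis using gnz[OF s(1)] by simp
  qed
  have Ysq: "(Ym *\<^sub>v sq) $ i = th k * (x $ i)^2 + e $ 1 * (th 1 - th k) * x $ i + e $ 0 * (th 0 - th k)"
    if i: "i < ?n" for i
  proof -
    have "Ym *\<^sub>v sq = vec ?n (\<lambda>i. \<Sum>s<?n. e $ s * (Ym *\<^sub>v u s) $ i)"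
      unfolding sqU U_def by (rule mat_vec_cols[OF Ym uc ec])
    then have "(Ym *\<^sub>v sq) $ i = (\<Sum>s<?n. e $ s * (Ym *\<^sub>v u s) $ i)"
      using i by simp
    also have "\<dots> = (\<Sum>s<?n. e $ s * th s * u s $ i)"
    proof (rule sum.cong[OF refl])
      fix s assume "s \<in> {..<?n}"
      then have s: "s \<le> d" by simp
      have "dim_vec (u s) = ?n" "Ym *\<^sub>v u s = th s \<cdot>\<^sub>v u s" using u[OF s] by auto
      then show "e $ s * (Ym *\<^sub>v u s) $ i = e $ s * th s * u s $ i" using i by simp
    qed
    finally have "(Ym *\<^sub>v sq) $ i = (\<Sum>s<?n. e $ s * th s * u s $ i)" .
    moreover have "sq $ i = (\<Sum>s<?n. e $ s * u s $ i)" using Uexp[OF ec i] sqU by simp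
    ultimately have "(Ym *\<^sub>v sq) $ i - th k * sq $ i = (\<Sum>s<?n. e $ s * (th s - th k) * u s $ i)"
      by (simp add: sum_distrib_left sum_subtractf[symmetric] algebra_simps)
    also have "\<dots> = e $ 0 * (th 0 - th k) * u 0 $ i + e $ 1 * (th 1 - th k) * u 1 $ i"
    proof (rule sum_two[OF n2])
      fix s assume s: "s < ?n" "s \<noteq> 0" "s \<noteq> 1"
      show "e $ s * (th s - th k) * u s $ i = 0"
      proof (cases "s = k")
        case False then show ?thesis using es0[of s] s by simp
      qed simp
    qed
    finally show ?thesis unfolding u0 one_def x_def sq_def using i by (simp add: algebra_simps)
  qed
  show ?thesis
    apply (rule exI[of _ x], rule exI[of _ a], rule exI[of _ b])
    apply (rule exI[of _ "e $ 0 * (th 0 - th k)"], rule exI[of _ "e $ 1 * (th 1 - th k)"], rule exI[of _ "th k"])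
    using xc xe tsx Ysq unfolding sq_def by simp
qed


theorem corollary9p5:
  fixes d :: nat
    and Es E :: "nat \<Rightarrow> 'a::field mat"
    and A :: "'a mat"
    and th ts :: "nat \<Rightarrow> 'a"
  assumes d3: "d \<ge> 3"
    and Es: "orth_idem_system (Suc d) d Es"
    and A: "A \<in> carrier_mat (Suc d) (Suc d)"
    and tri0: "\<forall>i\<le>d. \<forall>j\<le>d. (i + 1 < j \<or> j + 1 < i) \<longrightarrow> Es i * A * Es j = 0\<^sub>m (Suc d) (Suc d)"
    and tri1: "\<forall>i\<le>d. \<forall>j\<le>d. (i + 1 = j \<or> j + 1 = i) \<longrightarrow> Es i * A * Es j \<noteq> 0\<^sub>m (Suc d) (Suc d)"
    and mf: "mult_free_eigs d A th"
    and prim: "\<forall>i\<le>d. primitive_idem (Suc d) d A th i (E i)"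
    and bip: "bipartite d Es A"
    and ts: "inj_on ts {..d}"
    and norm: "normalizing (Suc d) d Es A (th 0)"
    and tail: "is_tail (Suc d) d E (mat_lincomb (Suc d) d ts Es)"
  shows "\<exists>\<beta> c. \<forall>i. 1 \<le> i \<and> i \<le> d - 1 \<longrightarrow> ts (i - 1) - \<beta> * ts i + ts (i + 1) = c"
proof -
  let ?n = "Suc d"
  have Esc: "Es i \<in> carrier_mat ?n ?n" if "i \<le> d" for i using Es that unfolding orth_idem_system_def by simp
  have Esm: "Es i * Es j = (if i = j then Es i else 0\<^sub>m ?n ?n)" if "i \<le> d" "j \<le> d" for i j
    using Es that unfolding orth_idem_system_def by simp
  obtain v :: "nat \<Rightarrow> 'a vec" and Y :: "nat \<Rightarrow> nat \<Rightarrow> 'a" where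
    vw: "\<forall>i\<le>d. v i \<in> carrier_vec ?n \<and> (\<exists>w \<in> carrier_vec ?n. v i = Es i *\<^sub>v w)" and
    indep: "\<forall>c. vec_lincomb ?n d c v = 0\<^sub>v ?n \<longrightarrow> (\<forall>i\<le>d. c i = 0)" and
    Av: "\<forall>j\<le>d. A *\<^sub>v v j = vec_lincomb ?n d (\<lambda>i. Y i j) v" and
    rsum: "\<forall>i\<le>d. (\<Sum>j\<le>d. Y i j) = th 0"
    using norm unfolding normalizing_def by blast
  have vc: "v i \<in> carrier_vec ?n" if "i < ?n" for i using vw that by simp
  have Esv: "Es i *\<^sub>v v j = (if i = j then v j else 0\<^sub>v ?n)" if ij: "i \<le> d" "j \<le> d" for i j
  proof -
    obtain w where w: "w \<in> carrier_vec ?n" "v j = Es j *\<^sub>v w" using vw ij by blast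
    have "Es i *\<^sub>v v j = (Es i * Es j) *\<^sub>v w" using w assoc_mult_mat_vec[OF Esc[OF ij(1)] Esc[OF ij(2)] w(1)] by simp
    also have "\<dots> = (if i = j then v j else 0\<^sub>v ?n)" using Esm[OF ij] w zero_mat_vec[OF w(1)] by simp
    finally show ?thesis .
  qed
  define W where "W = mat ?n ?n (\<lambda>(r,j). v j $ r)"
  have Wc: "W \<in> carrier_mat ?n ?n" unfolding W_def by simp
  have Wlin: "W *\<^sub>v c = vec_lincomb ?n d (\<lambda>i. c $ i) v" if c: "c \<in> carrier_vec ?n" for c
  proof -
    have "W *\<^sub>v c = vec ?n (\<lambda>i. \<Sum>s<?n. c $ s * v s $ i)" unfolding W_def by (rule U_vec[OF vc c])
    then show ?thesis unfolding vec_lincomb_def lessThan_Suc_atMost by simp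
  qed
  have Winj: "c = 0\<^sub>v ?n" if c: "c \<in> carrier_vec ?n" and z: "W *\<^sub>v c = 0\<^sub>v ?n" for c
  proof -
    have "\<forall>i\<le>d. c $ i = 0" using indep z Wlin[OF c] by auto
    then show ?thesis using c by (intro eq_vecI) auto
  qed
  obtain C where C: "C \<in> carrier_mat ?n ?n" "C * W = 1\<^sub>m ?n" "W * C = 1\<^sub>m ?n"
    using inv_of_inj[OF Wc Winj] by blast
  define Ym where "Ym = mat ?n ?n (\<lambda>(i,j). Y i j)"
  have Ymc: "Ym \<in> carrier_mat ?n ?n" unfolding Ym_def by simp
  have AW: "A * W = W * Ym"
  proof (rule eq_matI)
    fix r j assume rj: "r < dim_row (W * Ym)" "j < dim_col (W * Ym)"
    then have r: "r < ?n" and j: "j < ?n" using Wc Ymc by auto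
    have "(A * W) $$ (r,j) = (A *\<^sub>v v j) $ r" unfolding W_def by (rule mult_cols_entry[OF A vc r j])
    also have "\<dots> = (\<Sum>i\<le>d. Y i j * v i $ r)" using Av j r unfolding vec_lincomb_def by simp
    also have "\<dots> = (\<Sum>k<?n. v k $ r * Ym $$ (k,j))"
      unfolding lessThan_Suc_atMost[symmetric] Ym_def using j by (intro sum.cong refl) auto
    also have "\<dots> = (W * Ym) $$ (r,j)" unfolding W_def by (rule mult_W_right_entry[OF Ymc r j, symmetric])
    finally show "(A * W) $$ (r,j) = (W * Ym) $$ (r,j)" .
  qed (use A Wc Ymc in auto)
  define Dg where "Dg i = mat ?n ?n (\<lambda>(a,b). if a = i \<and> b = i then 1 else (0::'a))" for i
  have Dgc: "Dg i \<in> carrier_mat ?n ?n" for i unfolding Dg_def by simp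
  have EsW: "Es i * W = W * Dg i" if i: "i \<le> d" for i
  proof (rule eq_matI)
    fix r j assume rj: "r < dim_row (W * Dg i)" "j < dim_col (W * Dg i)"
    then have r: "r < ?n" and j: "j < ?n" using Wc by (auto simp: Dg_def)
    have "(Es i * W) $$ (r,j) = (Es i *\<^sub>v v j) $ r" unfolding W_def by (rule mult_cols_entry[OF Esc[OF i] vc r j])
    also have "\<dots> = (if j = i then v i $ r else 0)" using Esv[OF i, of j] j r by auto
    also have "\<dots> = (\<Sum>k<?n. if k = i then (if j = i then v i $ r else 0) else 0)" using i by simp
    also have "\<dots> = (\<Sum>k<?n. v k $ r * Dg i $$ (k,j))"
      unfolding Dg_def using j by (intro sum.cong refl) auto
    also have "\<dots> = (W * Dg i) $$ (r,j)" unfolding W_def by (rule mult_W_right_entry[OF Dgc r j, symmetric])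
    finally show "(Es i * W) $$ (r,j) = (W * Dg i) $$ (r,j)" .
  qed (use Esc[OF i] Wc in \<open>auto simp: Dg_def\<close>)
  have AeqW: "A = W * Ym * C"
  proof -
    have "A = A * (W * C)" using C A by simp
    also have "\<dots> = (A * W) * C" using A Wc C by simp
    finally show ?thesis unfolding AW .
  qed
  have EseqW: "Es i = W * Dg i * C" if i: "i \<le> d" for i
  proof -
    have "Es i = Es i * (W * C)" using C Esc[OF i] by simp
    also have "\<dots> = (Es i * W) * C" using Esc[OF i] Wc C by simp
    finally show ?thesis unfolding EsW[OF i] .
  qed
  have YmeqC: "Ym = C * A * W"
  proof -
    have "C * A * W = C * (A * W)" using C A Wc by simp
    also have "\<dots> = (C * W) * Ym" unfolding AW using assoc_mult_mat[OF C(1) Wc Ymc] by simp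
    finally show ?thesis using C Ymc by simp
  qed
  have CWX: "C * (W * X) = X" if "X \<in> carrier_mat ?n k" for X k
    using assoc_mult_mat[OF C(1) Wc that] C(2) that by simp
  have CWn: "C * (W * X) = X" if "X \<in> carrier_mat ?n ?n" for X using CWX[OF that] .
  have mone1: "X * 1\<^sub>m ?n = X" if "X \<in> carrier_mat ?n ?n" for X :: "'a mat"
    by (rule right_mult_one_mat[OF that])
  have mone2: "1\<^sub>m ?n * X = X" if "X \<in> carrier_mat ?n ?n" for X :: "'a mat"
    by (rule left_mult_one_mat[OF that])
  have massoc: "X * Y * Z = X * (Y * Z)" if "X \<in> carrier_mat ?n ?n" "Y \<in> carrier_mat ?n ?n" "Z \<in> carrier_mat ?n ?n" for X Y Z :: "'a mat"
    using that by simp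
  have mc: "X * Y \<in> carrier_mat ?n ?n" if "X \<in> carrier_mat ?n ?n" "Y \<in> carrier_mat ?n ?n" for X Y :: "'a mat"
    using that by simp
  have sand: "Es i * A * Es j = W * (Dg i * Ym * Dg j) * C" if ij: "i \<le> d" "j \<le> d" for i j
    unfolding EseqW[OF ij(1)] EseqW[OF ij(2)] AeqW using Wc C(1) Ymc Dgc
    by (simp add: massoc mc CWn mone1 mone2)
  have Sg: "Dg i * Ym * Dg j = mat ?n ?n (\<lambda>(a,b). if a = i \<and> b = j then Y i j else 0)"
    if ij: "i \<le> d" "j \<le> d" for i j
  proof -
    have "Dg i * Ym = mat ?n ?n (\<lambda>(a,b). if a = i then Ym $$ (i,b) else 0)"
      unfolding Dg_def by (rule Dg_left[OF Ymc]) (use ij in simp)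
    moreover have "mat ?n ?n (\<lambda>(a,b). if a = i then Ym $$ (i,b) else 0) * Dg j
        = mat ?n ?n (\<lambda>(a,b). if b = j then mat ?n ?n (\<lambda>(a,b). if a = i then Ym $$ (i,b) else 0) $$ (a,j) else 0)"
      unfolding Dg_def by (rule Dg_right) (use ij in simp_all)
    ultimately show ?thesis using ij by (intro eq_matI) (auto simp: Ym_def)
  qed
  have Yz: "Y i j = 0 \<longleftrightarrow> Es i * A * Es j = 0\<^sub>m ?n ?n" if ij: "i \<le> d" "j \<le> d" for i j
  proof
    assume "Y i j = 0"
    then have "Dg i * Ym * Dg j = 0\<^sub>m ?n ?n" unfolding Sg[OF ij] by (intro eq_matI) auto
    then show "Es i * A * Es j = 0\<^sub>m ?n ?n" unfolding sand[OF ij]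
      using right_mult_zero_mat[OF Wc] left_mult_zero_mat[OF C(1)] by simp
  next
    assume z: "Es i * A * Es j = 0\<^sub>m ?n ?n"
    have "C * (Es i * A * Es j) * W = C * (W * (Dg i * Ym * Dg j) * C) * W" unfolding sand[OF ij] ..
    also have "\<dots> = Dg i * Ym * Dg j" using Wc C Ymc Dgc
      by (simp add: massoc mc CWn mone1 mone2)
    finally have "Dg i * Ym * Dg j = 0\<^sub>m ?n ?n" unfolding z using C(1) Wc by simp
    then have "(Dg i * Ym * Dg j) $$ (i,j) = 0" using ij by simp
    then show "Y i j = 0" unfolding Sg[OF ij] using ij by simp
  qed
  have Ydiag: "Y i i = 0" if i: "i \<le> d" for i
  proof -
    have "Es i * A = W * (Dg i * Ym * C)" unfolding EseqW[OF i] AeqW using Wc C(1) Ymc Dgc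
      by (simp add: massoc mc CWn mone1 mone2)
    then have "mtrace (Es i * A) = mtrace ((Dg i * Ym * C) * W)"
      using mtrace_comm[OF Wc mc[OF mc[OF Dgc Ymc] C(1)]] by simp
    also have "\<dots> = mtrace (Dg i * Ym)" using Dgc Ymc C Wc by (simp add: massoc mc CWn mone1 mone2)
    also have "Dg i * Ym = mat ?n ?n (\<lambda>(a,b). if a = i then Ym $$ (i,b) else 0)"
      unfolding Dg_def by (rule Dg_left[OF Ymc]) (use i in simp)
    also have "mtrace \<dots> = (\<Sum>a<?n. if a = i then Y i i else 0)"
      unfolding mtrace_def Ym_def by (intro sum.cong refl) auto
    also have "\<dots> = Y i i" using i by simp
    finally show ?thesis using bip i unfolding bipartite_def by simp
  qed
  have tz: "\<forall>i<?n. \<forall>j<?n. j \<noteq> i + 1 \<and> i \<noteq> j + 1 \<longrightarrow> Ym $$ (i,j) = 0"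
  proof (intro allI impI)
    fix i j assume i: "i < ?n" and j: "j < ?n" and ne: "j \<noteq> i + 1 \<and> i \<noteq> j + 1"
    show "Ym $$ (i,j) = 0"
    proof (cases "i = j")
      case True then show ?thesis using Ydiag i unfolding Ym_def by simp
    next
      case False
      then have "i + 1 < j \<or> j + 1 < i" using ne by auto
      then have "Es i * A * Es j = 0\<^sub>m ?n ?n" using tri0 i j by (meson less_Suc_eq_le)
      then show ?thesis using Yz[of i j] i j unfolding Ym_def by simp
    qed
  qed
  have tnz: "\<forall>i<d. Ym $$ (i, i+1) \<noteq> 0 \<and> Ym $$ (i+1, i) \<noteq> 0"
  proof (intro allI impI conjI)
    fix i assume i: "i < d"
    show "Ym $$ (i, i+1) \<noteq> 0" using Yz[of i "i+1"] tri1 i unfolding Ym_def by simp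
    show "Ym $$ (i+1, i) \<noteq> 0" using Yz[of "i+1" i] tri1 i unfolding Ym_def by simp
  qed
  have rows: "Ym *\<^sub>v vec ?n (\<lambda>_. 1) = th 0 \<cdot>\<^sub>v vec ?n (\<lambda>_. 1)"
  proof (rule eq_vecI)
    fix i assume "i < dim_vec (th 0 \<cdot>\<^sub>v vec ?n (\<lambda>_. 1::'a))"
    then have i: "i < ?n" by simp
    have "(Ym *\<^sub>v vec ?n (\<lambda>_. 1)) $ i = (\<Sum>j<?n. Ym $$ (i,j) * vec ?n (\<lambda>_. 1) $ j)"
      by (rule mat_vec_nth_sum[OF Ymc _ i]) simp
    also have "\<dots> = (\<Sum>j\<le>d. Y i j)" unfolding lessThan_Suc_atMost[symmetric] Ym_def using i
      by (intro sum.cong refl) auto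
    also have "\<dots> = th 0" using rsum i by simp
    finally show "(Ym *\<^sub>v vec ?n (\<lambda>_. 1)) $ i = (th 0 \<cdot>\<^sub>v vec ?n (\<lambda>_. 1)) $ i" using i by simp
  qed (use Ymc in simp)
  define As where "As = mat_lincomb ?n d ts Es"
  define Dm where "Dm = mat ?n ?n (\<lambda>(a,b). if a = b then ts a else 0)"
  have Asc: "As \<in> carrier_mat ?n ?n" unfolding As_def mat_lincomb_def by simp
  have Dmc: "Dm \<in> carrier_mat ?n ?n" unfolding Dm_def by simp
  have AsW: "As * W = W * Dm"
  proof (rule eq_matI)
    fix r j assume rj: "r < dim_row (W * Dm)" "j < dim_col (W * Dm)"
    then have r: "r < ?n" and j: "j < ?n" using Wc Dmc by auto
    have "(As * W) $$ (r,j) = (As *\<^sub>v v j) $ r" unfolding W_def by (rule mult_cols_entry[OF Asc vc r j])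
    also have "\<dots> = (\<Sum>k<?n. As $$ (r,k) * v j $ k)" by (rule mat_vec_nth_sum[OF Asc vc[OF j] r])
    also have "\<dots> = (\<Sum>k<?n. \<Sum>i\<le>d. ts i * (Es i $$ (r,k) * v j $ k))"
      unfolding As_def mat_lincomb_def using r by (intro sum.cong refl) (auto simp: sum_distrib_left sum_distrib_right ac_simps)
    also have "\<dots> = (\<Sum>i\<le>d. ts i * (\<Sum>k<?n. Es i $$ (r,k) * v j $ k))"
      unfolding sum_distrib_left by (rule sum.swap)
    also have "\<dots> = (\<Sum>i\<le>d. ts i * (Es i *\<^sub>v v j) $ r)"
      by (intro sum.cong refl) (use mat_vec_nth_sum[OF Esc vc[OF j] r] in simp)
    also have "\<dots> = (\<Sum>i\<le>d. if i = j then ts j * v j $ r else 0)"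
      using j r by (intro sum.cong refl) (auto simp: Esv)
    also have "\<dots> = ts j * v j $ r" using j by simp
    also have "\<dots> = (\<Sum>k<?n. v k $ r * Dm $$ (k,j))"
    proof -
      have "(\<Sum>k<?n. v k $ r * Dm $$ (k,j)) = (\<Sum>k<?n. if k = j then ts j * v j $ r else 0)"
        unfolding Dm_def using j by (intro sum.cong refl) auto
      then show ?thesis using j by simp
    qed
    also have "\<dots> = (W * Dm) $$ (r,j)" unfolding W_def by (rule mult_W_right_entry[OF Dmc r j, symmetric])
    finally show "(As * W) $$ (r,j) = (W * Dm) $$ (r,j)" .
  qed (use Asc Wc Dmc in auto)
  have AseqW: "As = W * Dm * C"
  proof -
    have "As = As * (W * C)" using C Asc by (simp add: mone1)
    also have "\<dots> = (As * W) * C" using Asc Wc C by (simp add: massoc)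
    finally show ?thesis unfolding AsW .
  qed
  have Ec: "E s \<in> carrier_mat ?n ?n" if "s \<le> d" for s using prim that unfolding primitive_idem_def by simp
  define F where "F s = C * E s * W" for s
  have Fc: "F s \<in> carrier_mat ?n ?n" if "s \<le> d" for s unfolding F_def using C(1) Ec[OF that] Wc by simp
  have Fv: "F s *\<^sub>v x = C *\<^sub>v (E s *\<^sub>v (W *\<^sub>v x))" if s: "s \<le> d" and x: "x \<in> carrier_vec ?n" for s x
  proof -
    have "F s *\<^sub>v x = (C * E s) *\<^sub>v (W *\<^sub>v x)" unfolding F_def
      using assoc_mult_mat_vec[OF mult_carrier_mat[OF C(1) Ec[OF s]] Wc x] .
    also have "\<dots> = C *\<^sub>v (E s *\<^sub>v (W *\<^sub>v x))" using assoc_mult_mat_vec[OF C(1) Ec[OF s] mult_mat_vec_carrier[OF Wc x]] .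
    finally show ?thesis .
  qed
  have AWx: "A *\<^sub>v (W *\<^sub>v x) = W *\<^sub>v (Ym *\<^sub>v x)" if x: "x \<in> carrier_vec ?n" for x
  proof -
    have "A *\<^sub>v (W *\<^sub>v x) = (A * W) *\<^sub>v x" using assoc_mult_mat_vec[OF A Wc x] by simp
    also have "\<dots> = W *\<^sub>v (Ym *\<^sub>v x)" unfolding AW using assoc_mult_mat_vec[OF Wc Ymc x] .
    finally show ?thesis .
  qed
  have CWv: "C *\<^sub>v (W *\<^sub>v x) = x" if x: "x \<in> carrier_vec ?n" for x
    using assoc_mult_mat_vec[OF C(1) Wc x] C(2) x by simp
  have primY: "\<forall>s\<le>d. primitive_idem ?n d Ym th s (F s)"
  proof (intro allI impI)
    fix s assume s: "s \<le> d"
    have P: "E s \<in> carrier_mat ?n ?n"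
      "\<forall>v \<in> carrier_vec ?n. A *\<^sub>v v = th s \<cdot>\<^sub>v v \<longrightarrow> E s *\<^sub>v v = v"
      "\<forall>j\<le>d. j \<noteq> s \<longrightarrow> (\<forall>v \<in> carrier_vec ?n. A *\<^sub>v v = th j \<cdot>\<^sub>v v \<longrightarrow> E s *\<^sub>v v = 0\<^sub>v ?n)"
      using prim s unfolding primitive_idem_def by auto
    have eigW: "A *\<^sub>v (W *\<^sub>v x) = th j \<cdot>\<^sub>v (W *\<^sub>v x)" if "x \<in> carrier_vec ?n" "Ym *\<^sub>v x = th j \<cdot>\<^sub>v x" for x j
      using AWx[OF that(1)] that mult_mat_vec[OF Wc that(1)] by simp
    show "primitive_idem ?n d Ym th s (F s)"
      unfolding primitive_idem_def
    proof (intro conjI ballI allI impI)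
      show "F s \<in> carrier_mat ?n ?n" by (rule Fc[OF s])
    next
      fix x assume x: "x \<in> carrier_vec ?n" and ex: "Ym *\<^sub>v x = th s \<cdot>\<^sub>v x"
      have "E s *\<^sub>v (W *\<^sub>v x) = W *\<^sub>v x" using P(2) eigW[OF x ex] Wc x by simp
      then show "F s *\<^sub>v x = x" using Fv[OF s x] CWv[OF x] by simp
    next
      fix j x assume j: "j \<le> d" "j \<noteq> s" and x: "x \<in> carrier_vec ?n" and ex: "Ym *\<^sub>v x = th j \<cdot>\<^sub>v x"
      have "E s *\<^sub>v (W *\<^sub>v x) = 0\<^sub>v ?n" using P(3) j eigW[OF x ex] Wc x by simp
      then show "F s *\<^sub>v x = 0\<^sub>v ?n" using Fv[OF s x] mat_vec_zero[OF C(1)] by simp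
    qed
  qed
  have eigs: "\<forall>s\<le>d. \<exists>x\<in>carrier_vec ?n. x \<noteq> 0\<^sub>v ?n \<and> Ym *\<^sub>v x = th s \<cdot>\<^sub>v x"
  proof (intro allI impI)
    fix s assume s: "s \<le> d"
    obtain w where w: "w \<in> carrier_vec ?n" "w \<noteq> 0\<^sub>v ?n" "A *\<^sub>v w = th s \<cdot>\<^sub>v w"
      using mf s A unfolding mult_free_eigs_def eigenvalue_def eigenvector_def by auto
    let ?x = "C *\<^sub>v w"
    have xc: "?x \<in> carrier_vec ?n" using C(1) w by simp
    have Wx: "W *\<^sub>v ?x = w" using assoc_mult_mat_vec[OF Wc C(1) w(1)] C(3) w by simp
    have "Ym *\<^sub>v ?x = C *\<^sub>v (A *\<^sub>v (W *\<^sub>v ?x))"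
      unfolding YmeqC using assoc_mult_mat_vec[OF mult_carrier_mat[OF C(1) A] Wc xc]
        assoc_mult_mat_vec[OF C(1) A mult_mat_vec_carrier[OF Wc xc]] by simp
    also have "\<dots> = th s \<cdot>\<^sub>v ?x" unfolding Wx w(3) using mult_mat_vec[OF C(1) w(1)] .
    finally have "Ym *\<^sub>v ?x = th s \<cdot>\<^sub>v ?x" .
    moreover have "?x \<noteq> 0\<^sub>v ?n"
    proof
      assume "?x = 0\<^sub>v ?n"
      then have "W *\<^sub>v ?x = 0\<^sub>v ?n" using mat_vec_zero[OF Wc] by simp
      then show False using Wx w(2) by simp
    qed
    ultimately show "\<exists>x\<in>carrier_vec ?n. x \<noteq> 0\<^sub>v ?n \<and> Ym *\<^sub>v x = th s \<cdot>\<^sub>v x" using xc by blast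
  qed
  have FDF: "F r * Dm * F s = C * (E r * As * E s) * W" if "r \<le> d" "s \<le> d" for r s
    unfolding F_def AseqW using Wc C(1) Dmc Ec[OF that(1)] Ec[OF that(2)]
    by (simp add: massoc mc CWn mone1 mone2)
  have tl0: "\<forall>s\<le>d. s \<noteq> 0 \<longrightarrow> s \<noteq> 1 \<longrightarrow> F 0 * Dm * F s = 0\<^sub>m ?n ?n"
  proof (intro allI impI)
    fix s assume s: "s \<le> d" "s \<noteq> 0" "s \<noteq> 1"
    have "\<not> delta_adj ?n E As 0 s" using tail s unfolding is_tail_def As_def by auto
    then have "E 0 * As * E s = 0\<^sub>m ?n ?n" using s unfolding delta_adj_def by auto
    then show "F 0 * Dm * F s = 0\<^sub>m ?n ?n" using FDF[of 0 s] s
      right_mult_zero_mat[OF C(1)] left_mult_zero_mat[OF Wc] by simp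
  qed
  define S where "S = {j. j \<le> d \<and> j \<noteq> 0 \<and> delta_adj ?n E As 1 j}"
  have cS: "card S \<le> 1" using tail unfolding is_tail_def S_def As_def by simp
  have fS: "finite S" unfolding S_def by simp
  obtain k where k: "k \<le> d" "S \<subseteq> {k}"
  proof (cases "S = {}")
    case True then show ?thesis using that[of 0] by simp
  next
    case False
    then have "card S = 1" using cS fS by (simp add: card_gt_0_iff le_antisym Suc_leI)
    then obtain k where "S = {k}" by (rule card_1_singletonE)
    then show ?thesis using that[of k] unfolding S_def by auto
  qed
  have tl1: "\<forall>s\<le>d. s \<noteq> 0 \<longrightarrow> s \<noteq> 1 \<longrightarrow> s \<noteq> k \<longrightarrow> F 1 * Dm * F s = 0\<^sub>m ?n ?n"
  proof (intro allI impI)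
    fix s assume s: "s \<le> d" "s \<noteq> 0" "s \<noteq> 1" "s \<noteq> k"
    have "s \<notin> S" using k s by auto
    then have "\<not> delta_adj ?n E As 1 s" using s unfolding S_def by auto
    then have "E 1 * As * E s = 0\<^sub>m ?n ?n" using s unfolding delta_adj_def by auto
    then show "F 1 * Dm * F s = 0\<^sub>m ?n ?n" using FDF[of 1 s] s d3
      right_mult_zero_mat[OF C(1)] left_mult_zero_mat[OF Wc] by simp
  qed
  obtain x a b r0 r1 r2 where x: "x \<in> carrier_vec ?n" "Ym *\<^sub>v x = th 1 \<cdot>\<^sub>v x"
    and tsx: "\<forall>i\<le>d. ts i = a + b * x $ i"
    and sqx: "\<forall>i<?n. (Ym *\<^sub>v vec ?n (\<lambda>j. (x $ j)^2)) $ i = r2 * (x $ i)^2 + r1 * x $ i + r0"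
    using coord[OF d3 Ymc tz tnz rows _ eigs primY ts _ k(1)] tl0 tl1 mf
    unfolding Dm_def mult_free_eigs_def by blast
  have tzY: "\<forall>j<Suc d. j \<noteq> i + 1 \<and> i \<noteq> j + 1 \<longrightarrow> Y i j = 0" if "i < ?n" for i
    using tz that unfolding Ym_def by auto
  have Ysum: "(Ym *\<^sub>v p) $ i = (\<Sum>j<Suc d. Y i j * p $ j)" if "p \<in> carrier_vec ?n" "i < ?n" for p i
    using mat_vec_nth_sum[OF Ymc that] that unfolding Ym_def by simp
  have d0: "0 < d" using d3 by simp
  have tzY0: "\<forall>j<Suc d. j \<noteq> 0 + 1 \<and> 0 \<noteq> j + 1 \<longrightarrow> Y 0 j = 0" by (rule tzY) simp
  let ?sq = "vec ?n (\<lambda>j. (x $ j)^2)"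
  have xinj: "inj_on (\<lambda>i. x $ i) {..d}"
  proof (rule inj_onI)
    fix i j assume ij: "i \<in> {..d}" "j \<in> {..d}" "x $ i = x $ j"
    then have "ts i = ts j" using tsx by simp
    then show "i = j" using inj_onD[OF ts] ij by simp
  qed
  have r0s: "(\<Sum>j<Suc d. Y 0 j * (\<lambda>_. 1::'a) j) = Y 0 1 * 1" by (rule tri_sum0[OF _ d0]) (use tzY in simp)
  have rsum': "(\<Sum>j<Suc d. Y i j * 1) = th 0" if "i \<le> d" for i using rsum that by (simp add: lessThan_Suc_atMost)
  obtain \<beta> e where be: "\<forall>i. 1 \<le> i \<and> i \<le> d - 1 \<longrightarrow> x $ (i - 1) - \<beta> * x $ i + x $ (i + 1) = e"
  proof -
    have "\<exists>\<beta> e. \<forall>i. 1 \<le> i \<and> i \<le> d - 1 \<longrightarrow> x $ (i - 1) - \<beta> * x $ i + x $ (i + 1) = e"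
    proof (rule final_alg[where b = "\<lambda>i. Y i (i+1)" and c = "\<lambda>i. Y i (i-1)" and x = "\<lambda>i. x $ i"
          and ta = "th 0" and tb = "th 1" and rk = r0 and rl = r1 and rq = r2, OF d3])
      show "Y 0 (0+1) \<noteq> 0" using tnz d0 unfolding Ym_def by auto
      show "\<forall>i. 0 < i \<and> i < d \<longrightarrow> Y i (i+1) \<noteq> 0" using tnz unfolding Ym_def by auto
      show "Y 0 (0+1) = th 0" using r0s rsum'[of 0] by simp
      show "\<forall>i. 0 < i \<and> i < d \<longrightarrow> Y i (i - 1) + Y i (i + 1) = th 0"
      proof (intro allI impI)
        fix i assume i: "0 < i \<and> i < d"
        have "(\<Sum>j<Suc d. Y i j * (\<lambda>_. 1::'a) j) = Y i (i-1) * 1 + Y i (i+1) * 1"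
          by (rule tri_sum) (use tzY i in auto)
        then show "Y i (i - 1) + Y i (i + 1) = th 0" using rsum'[of i] i by simp
      qed
      have ex: "(\<Sum>j<Suc d. Y i j * x $ j) = th 1 * x $ i" if "i < ?n" for i
        using Ysum[OF x(1) that] x that by simp
      show "Y 0 (0+1) * x $ 1 = th 1 * x $ 0"
        using ex[of 0] tri_sum0[where Y=Y and d=d and f="\<lambda>j. x $ j", OF tzY0 d0] by simp
      show "\<forall>i. 0 < i \<and> i < d \<longrightarrow> Y i (i - 1) * x $ (i - 1) + Y i (i + 1) * x $ (i + 1) = th 1 * x $ i"
      proof (intro allI impI)
        fix i assume i: "0 < i \<and> i < d"
        show "Y i (i - 1) * x $ (i - 1) + Y i (i + 1) * x $ (i + 1) = th 1 * x $ i"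
          using ex[of i] tri_sum[where Y=Y and d=d and i=i and f="\<lambda>j. x $ j", OF tzY] i by simp
      qed
      have es: "(\<Sum>j<Suc d. Y i j * (x $ j)^2) = r2 * (x $ i)^2 + r1 * x $ i + r0" if "i < ?n" for i
        using Ysum[of ?sq i] sqx that by simp
      show "Y 0 (0+1) * (x $ 1)^2 = r2 * (x $ 0)^2 + r1 * x $ 0 + r0"
        using es[of 0] tri_sum0[where Y=Y and d=d and f="\<lambda>j. (x $ j)^2", OF tzY0 d0] by simp
      show "\<forall>i. 0 < i \<and> i < d \<longrightarrow> Y i (i - 1) * (x $ (i - 1))^2 + Y i (i + 1) * (x $ (i + 1))^2 = r2 * (x $ i)^2 + r1 * x $ i + r0"
      proof (intro allI impI)
        fix i assume i: "0 < i \<and> i < d"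
        show "Y i (i - 1) * (x $ (i - 1))^2 + Y i (i + 1) * (x $ (i + 1))^2 = r2 * (x $ i)^2 + r1 * x $ i + r0"
          using es[of i] tri_sum[where Y=Y and d=d and i=i and f="\<lambda>j. (x $ j)^2", OF tzY] i by simp
      qed
      show "inj_on (\<lambda>i. x $ i) {..d}" by (rule xinj)
    qed
    then show ?thesis using that by blast
  qed
  show ?thesis
  proof (intro exI allI impI)
    fix i assume i: "1 \<le> i \<and> i \<le> d - 1"
    have "ts (i - 1) - \<beta> * ts i + ts (i + 1) = (2 - \<beta>) * a + b * (x $ (i - 1) - \<beta> * x $ i + x $ (i + 1))"
    proof -
      have h: "ts (i - 1) = a + b * x $ (i - 1)" "ts i = a + b * x $ i" "ts (i + 1) = a + b * x $ (i + 1)"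
        using tsx i by auto
      show ?thesis unfolding h by (simp add: algebra_simps)
    qed
    also have "\<dots> = (2 - \<beta>) * a + b * e" using be i by simp
    finally show "ts (i - 1) - \<beta> * ts i + ts (i + 1) = (2 - \<beta>) * a + b * e" .
  qed
qed

end
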